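(* The flow-cut gap for Minimum Cooperative Cut can be as large as $n-1$: for every $n\ge 2$ there is a directed graph on $n$ nodes with terminals $s,t$ and a normalized, monotone nondecreasing submodular $f$ on its edges such that $f(C^* )/\nu^*=n-1$, where $C^*$ is an $f$-minimal $(s,t)$-cut and $\nu^*$ is the optimal value of the Maximum Cooperative Flow problem.
   Context: An $(s,t)$-cut is a set of edges whose removal disconnects all $s$-$t$ paths; $C^*$ minimizes $f$ over $(s,t)$-cuts. The Maximum Cooperative Flow problem is: maximize $\nu$ over $\nu\in\mathbb{R}$, $\varphi\in\mathbb{R}^{\mathcal{E}}$ subject to $\varphi\ge0$; $\sum_{e\in A}\varphi(e)\le f(A)$ for all $A\subseteq\mathcal{E}$; and $\sum_{e\in\delta^+(u)}\varphi(e)-\sum_{e\in\delta^-(u)}\varphi(e)=d(u)\nu$ for all nodes $u$, where $d(s)=1$, $d(t)=-1$, $d(u)=0$ otherwise. The flow-cut gap is the ratio $f(C^* )/\nu^*$. *)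

theory Defs
  imports Complex_Main
begin

definition digraph :: "'v set \<Rightarrow> ('v \<times> 'v) set \<Rightarrow> bool" where
  "digraph V E \<longleftrightarrow> finite V \<and> E \<subseteq> V \<times> V \<and> (\<forall>(u,v)\<in>E. u \<noteq> v)"

definition normalized :: "('e set \<Rightarrow> real) \<Rightarrow> bool" where
  "normalized f \<longleftrightarrow> f {} = 0"

definition monotone_nondecr :: "'e set \<Rightarrow> ('e set \<Rightarrow> real) \<Rightarrow> bool" where
  "monotone_nondecr E f \<longleftrightarrow> (\<forall>A B. A \<subseteq> B \<and> B \<subseteq> E \<longrightarrow> f A \<le> f B)"

definition submodular :: "'e set \<Rightarrow> ('e set \<Rightarrow> real) \<Rightarrow> bool" where
  "submodular E f \<longleftrightarrow>
     (\<forall>A B. A \<subseteq> E \<and> B \<subseteq> E \<longrightarrow> f (A \<union> B) + f (A \<inter> B) \<le> f A + f B)"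

definition st_cut :: "('v \<times> 'v) set \<Rightarrow> 'v \<Rightarrow> 'v \<Rightarrow> ('v \<times> 'v) set \<Rightarrow> bool" where
  "st_cut E s t C \<longleftrightarrow> C \<subseteq> E \<and> (s, t) \<notin> (E - C)\<^sup>*"

definition min_coop_cut :: "('v \<times> 'v) set \<Rightarrow> 'v \<Rightarrow> 'v \<Rightarrow> (('v \<times> 'v) set \<Rightarrow> real)
    \<Rightarrow> ('v \<times> 'v) set \<Rightarrow> bool" where
  "min_coop_cut E s t f C \<longleftrightarrow> st_cut E s t C \<and> (\<forall>C'. st_cut E s t C' \<longrightarrow> f C \<le> f C')"

definition dem :: "'v \<Rightarrow> 'v \<Rightarrow> 'v \<Rightarrow> real" where
  "dem s t u = (if u = s then 1 else if u = t then -1 else 0)"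

definition coop_flow :: "'v set \<Rightarrow> ('v \<times> 'v) set \<Rightarrow> 'v \<Rightarrow> 'v \<Rightarrow> (('v \<times> 'v) set \<Rightarrow> real)
    \<Rightarrow> real \<Rightarrow> ('v \<times> 'v \<Rightarrow> real) \<Rightarrow> bool" where
  "coop_flow V E s t f \<nu> \<phi> \<longleftrightarrow>
     (\<forall>e\<in>E. 0 \<le> \<phi> e) \<and>
     (\<forall>A. A \<subseteq> E \<longrightarrow> (\<Sum>e\<in>A. \<phi> e) \<le> f A) \<and>
     (\<forall>u\<in>V. (\<Sum>e\<in>{e\<in>E. fst e = u}. \<phi> e) - (\<Sum>e\<in>{e\<in>E. snd e = u}. \<phi> e) = dem s t u * \<nu>)"

definition max_coop_flow_value :: "'v set \<Rightarrow> ('v \<times> 'v) set \<Rightarrow> 'v \<Rightarrow> 'v \<Rightarrow> (('v \<times> 'v) set \<Rightarrow> real)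
    \<Rightarrow> real \<Rightarrow> bool" where
  "max_coop_flow_value V E s t f \<nu> \<longleftrightarrow>
     (\<exists>\<phi>. coop_flow V E s t f \<nu> \<phi>) \<and> (\<forall>\<nu>' \<phi>'. coop_flow V E s t f \<nu>' \<phi>' \<longrightarrow> \<nu>' \<le> \<nu>)"

end

theory Submission
  imports Defs
begin

lemma path_reach:
  assumes "k < n"
  shows "(0::nat, k) \<in> {(i, Suc i) | i. Suc i < n}\<^sup>*"
  using assms
proof (induction k)
  case 0 then show ?case by simp
next
  case (Suc k)
  then have "(0, k) \<in> {(i, Suc i) | i. Suc i < n}\<^sup>*" by simp
  moreover have "(k, Suc k) \<in> {(i, Suc i) | i. Suc i < n}" using Suc.prems by simp
  ultimately show ?case by (rule rtrancl_into_rtrancl)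
qed

lemma no_reach:
  assumes "(x, y) \<in> R\<^sup>*" "x = (0::nat)" "\<forall>z. (0, z) \<notin> R"
  shows "y = 0"
  using assms by (induction rule: rtrancl_induct) auto

lemma out_edges:
  "{e \<in> {(i, Suc i) | i. Suc i < n}. fst e = u} = (if Suc u < n then {(u, Suc u)} else {})"
  by auto

lemma in_edges:
  "{e \<in> {(i, Suc i) | i. Suc i < n}. snd e = u} = (if 0 < u \<and> u < n then {(u - 1, u)} else {})"
  by (cases u) auto

lemma card_E: "card {(i, Suc i) | i. Suc i < (n::nat)} = n - 1"
proof -
  have "{(i, Suc i) | i. Suc i < n} = (\<lambda>i. (i, Suc i)) ` {0..<n-1}" by auto
  moreover have "inj_on (\<lambda>i. (i, Suc i)) {0..<n-1}" by (auto simp: inj_on_def)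
  ultimately show ?thesis by (simp add: card_image)
qed

theorem corollary1:
  fixes n :: nat
  assumes "n \<ge> 2"
  shows "\<exists>(E :: (nat \<times> nat) set) s t (f :: (nat \<times> nat) set \<Rightarrow> real) Cstar \<nu>star.
           digraph {0..<n} E \<and> s \<in> {0..<n} \<and> t \<in> {0..<n} \<and> s \<noteq> t \<and>
           normalized f \<and> monotone_nondecr E f \<and> submodular E f \<and>
           min_coop_cut E s t f Cstar \<and> max_coop_flow_value {0..<n} E s t f \<nu>star \<and>
           f Cstar / \<nu>star = real n - 1"
proof -
  define E where "E = {(i, Suc i) | i. Suc i < n}"
  define f :: "(nat \<times> nat) set \<Rightarrow> real" where "f A = (if A = {} then 0 else 1)" for A
  define \<nu> :: real where "\<nu> = 1 / (real n - 1)"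
  have n1: "real n - 1 > 0" using assms by simp
  have dg: "digraph {0..<n} E" unfolding digraph_def E_def by auto
  have nf: "normalized f" unfolding normalized_def f_def by simp
  have mf: "monotone_nondecr E f" unfolding monotone_nondecr_def f_def by auto
  have sf: "submodular E f" unfolding submodular_def f_def by auto
  have cut: "st_cut E 0 (n-1) {(0,1)}"
    unfolding st_cut_def
  proof
    show "{(0, 1)} \<subseteq> E" using assms unfolding E_def by auto
    show "(0, n - 1) \<notin> (E - {(0, 1)})\<^sup>*"
    proof
      assume "(0, n - 1) \<in> (E - {(0, 1)})\<^sup>*"
      moreover have "\<forall>z. (0, z) \<notin> E - {(0,1)}" unfolding E_def by auto
      ultimately have "n - 1 = 0" using no_reach by blast
      then show False using assms by simp
    qed
  qed
  have mc: "min_coop_cut E 0 (n-1) f {(0,1)}"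
    unfolding min_coop_cut_def
  proof (intro conjI allI impI)
    show "st_cut E 0 (n-1) {(0,1)}" by (rule cut)
    fix C' assume "st_cut E 0 (n-1) C'"
    then have "C' \<noteq> {}" using path_reach[of "n-1" n] assms unfolding st_cut_def E_def by auto
    then show "f {(0,1)} \<le> f C'" unfolding f_def by simp
  qed
  have cf: "coop_flow {0..<n} E 0 (n-1) f \<nu> (\<lambda>e. \<nu>)"
    unfolding coop_flow_def
  proof (intro conjI ballI allI impI)
    fix e assume "e \<in> E" then show "0 \<le> \<nu>" using n1 unfolding \<nu>_def by simp
  next
    fix A assume A: "A \<subseteq> E"
    have fin: "finite E" using dg unfolding digraph_def by (meson finite_SigmaI finite_atLeastLessThan finite_subset)
    show "(\<Sum>e\<in>A. \<nu>) \<le> f A"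
    proof (cases "A = {}")
      case True then show ?thesis unfolding f_def by simp
    next
      case False
      have "card A \<le> card E" using A fin by (simp add: card_mono)
      then have "real (card A) \<le> real n - 1" using card_E[of n] assms unfolding E_def by auto
      then have "real (card A) * \<nu> \<le> 1" using n1 unfolding \<nu>_def by (simp add: field_simps)
      then show ?thesis using False unfolding f_def by simp
    qed
  next
    fix u assume u: "u \<in> {0..<n}"
    show "(\<Sum>e\<in>{e\<in>E. fst e = u}. \<nu>) - (\<Sum>e\<in>{e\<in>E. snd e = u}. \<nu>) = dem 0 (n-1) u * \<nu>"
      unfolding E_def out_edges in_edges dem_def using u assms by auto
  qed
  have ub: "\<nu>' \<le> \<nu>" if c: "coop_flow {0..<n} E 0 (n-1) f \<nu>' \<phi>'" for \<nu>' \<phi>'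
  proof -
    have cons: "\<And>u. u < n \<Longrightarrow> (\<Sum>e\<in>{e\<in>E. fst e = u}. \<phi>' e) - (\<Sum>e\<in>{e\<in>E. snd e = u}. \<phi>' e) = dem 0 (n-1) u * \<nu>'"
      using c unfolding coop_flow_def by auto
    have x: "\<phi>' (i, Suc i) = \<nu>'" if "Suc i < n" for i
      using that
    proof (induction i)
      case 0
      have "\<phi>' (0, 1) = \<nu>'" using cons[of 0] 0 assms unfolding E_def out_edges in_edges dem_def by auto
      then show ?case by simp
    next
      case (Suc i)
      have h: "\<phi>' (Suc i, Suc (Suc i)) - \<phi>' (i, Suc i) = 0"
        using cons[of "Suc i"] Suc.prems unfolding E_def out_edges in_edges dem_def by auto
      then show ?case using Suc by simp
    qed
    have "(\<Sum>e\<in>E. \<phi>' e) \<le> f E" using c unfolding coop_flow_def by auto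
    moreover have "E \<noteq> {}" using assms unfolding E_def by (auto intro!: exI[of _ 0])
    moreover have "(\<Sum>e\<in>E. \<phi>' e) = (\<Sum>e\<in>E. \<nu>')"
      by (rule sum.cong) (auto simp: E_def x)
    moreover have "(\<Sum>e\<in>E. \<nu>') = (real n - 1) * \<nu>'"
      using card_E[of n] assms unfolding E_def by (simp add: of_nat_diff)
    ultimately have "(real n - 1) * \<nu>' \<le> 1"
      unfolding f_def by (metis mult_zero_left zero_le_one)
    then show ?thesis using n1 unfolding \<nu>_def by (simp add: field_simps)
  qed
  have mv: "max_coop_flow_value {0..<n} E 0 (n-1) f \<nu>"
    unfolding max_coop_flow_value_def using cf ub by blast
  have ratio: "f {(0,1)} / \<nu> = real n - 1" unfolding f_def \<nu>_def by simp
  show ?thesis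
    apply (rule exI[of _ E], rule exI[of _ 0], rule exI[of _ "n-1"], rule exI[of _ f],
           rule exI[of _ "{(0,1)}"], rule exI[of _ \<nu>])
    using dg nf mf sf mc mv ratio assms by auto
qed

end
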